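(* Let $G$ be a transitive permutation group on a finite set $\Omega$, let $N$ be a normal subgroup of $G$ such that the set $\Omega/N=\{\omega^N:\omega\in\Omega\}$ of $N$-orbits has at least $2$ elements, and let $G\circlearrowright\Omega/N$ denote the permutation group induced by the natural action of $G$ on $\Omega/N$. Then \[ \mathbf{m}(G)\ge\mathbf{m}(G\circlearrowright\Omega/N). \]
   Context: For a transitive permutation group $X$ on a finite set $\Sigma$ with $|\Sigma|\ge2$, a subset $A\subseteq\Sigma$ is self-separable for $X$ if there exists $x\in X$ with $A\cap A^x=\emptyset$; $\mathbf{m}(X)$ is the minimum cardinality of a subset of $\Sigma$ that is not self-separable for $X$. *)

theory Defs
  imports Main
begin

definition perm_inv :: "'a set \<Rightarrow> ('a \<Rightarrow> 'a) \<Rightarrow> ('a \<Rightarrow> 'a)" where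
  "perm_inv \<Omega> g = (\<lambda>x. if x \<in> \<Omega> then inv_into \<Omega> g x else x)"

definition is_perm_on :: "'a set \<Rightarrow> ('a \<Rightarrow> 'a) \<Rightarrow> bool" where
  "is_perm_on \<Omega> g \<longleftrightarrow> bij_betw g \<Omega> \<Omega> \<and> (\<forall>x. x \<notin> \<Omega> \<longrightarrow> g x = x)"

definition perm_group :: "'a set \<Rightarrow> ('a \<Rightarrow> 'a) set \<Rightarrow> bool" where
  "perm_group \<Omega> G \<longleftrightarrow> (\<forall>g\<in>G. is_perm_on \<Omega> g) \<and> id \<in> G \<and>
     (\<forall>g\<in>G. \<forall>h\<in>G. g \<circ> h \<in> G) \<and> (\<forall>g\<in>G. perm_inv \<Omega> g \<in> G)"

definition transitive_on :: "'a set \<Rightarrow> ('a \<Rightarrow> 'a) set \<Rightarrow> bool" where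
  "transitive_on \<Omega> G \<longleftrightarrow> (\<forall>x\<in>\<Omega>. \<forall>y\<in>\<Omega>. \<exists>g\<in>G. g x = y)"

definition normal_perm_subgroup :: "'a set \<Rightarrow> ('a \<Rightarrow> 'a) set \<Rightarrow> ('a \<Rightarrow> 'a) set \<Rightarrow> bool" where
  "normal_perm_subgroup \<Omega> N G \<longleftrightarrow> perm_group \<Omega> N \<and> N \<subseteq> G \<and>
     (\<forall>g\<in>G. \<forall>n\<in>N. g \<circ> n \<circ> perm_inv \<Omega> g \<in> N)"

definition orbit :: "('a \<Rightarrow> 'a) set \<Rightarrow> 'a \<Rightarrow> 'a set" where
  "orbit N \<omega> = {n \<omega> | n. n \<in> N}"

definition orbits :: "'a set \<Rightarrow> ('a \<Rightarrow> 'a) set \<Rightarrow> 'a set set" where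
  "orbits \<Omega> N = orbit N ` \<Omega>"

definition induced_perm :: "'a set \<Rightarrow> ('a \<Rightarrow> 'a) set \<Rightarrow> ('a \<Rightarrow> 'a) \<Rightarrow> ('a set \<Rightarrow> 'a set)" where
  "induced_perm \<Omega> N g = (\<lambda>B. if B \<in> orbits \<Omega> N then g ` B else B)"

definition induced_group :: "'a set \<Rightarrow> ('a \<Rightarrow> 'a) set \<Rightarrow> ('a \<Rightarrow> 'a) set \<Rightarrow> ('a set \<Rightarrow> 'a set) set" where
  "induced_group \<Omega> N G = induced_perm \<Omega> N ` G"

definition self_separable :: "('b \<Rightarrow> 'b) set \<Rightarrow> 'b set \<Rightarrow> bool" where
  "self_separable X A \<longleftrightarrow> (\<exists>x\<in>X. A \<inter> x ` A = {})"

definition mval :: "'b set \<Rightarrow> ('b \<Rightarrow> 'b) set \<Rightarrow> nat" where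
  "mval \<Sigma> X = (LEAST k. \<exists>A. A \<subseteq> \<Sigma> \<and> card A = k \<and> \<not> self_separable X A)"

end

theory Submission
  imports Defs
begin

lemma pinv_left: "is_perm_on \<Omega> g \<Longrightarrow> x \<in> \<Omega> \<Longrightarrow> perm_inv \<Omega> g (g x) = x"
  unfolding is_perm_on_def perm_inv_def
  by (auto simp: bij_betw_inv_into_left bij_betw_apply)

lemma pinv_right: "is_perm_on \<Omega> g \<Longrightarrow> x \<in> \<Omega> \<Longrightarrow> g (perm_inv \<Omega> g x) = x"
  unfolding is_perm_on_def perm_inv_def
  by (auto simp: bij_betw_inv_into_right)

lemma pinv_in: "is_perm_on \<Omega> g \<Longrightarrow> x \<in> \<Omega> \<Longrightarrow> perm_inv \<Omega> g x \<in> \<Omega>"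
  unfolding is_perm_on_def perm_inv_def
  by (auto intro: inv_into_into simp: bij_betw_def)

lemma key:
  assumes pg: "perm_group \<Omega> G" and nn: "normal_perm_subgroup \<Omega> N G"
    and g: "g \<in> G" and x: "x \<in> \<Omega>"
  shows "g ` orbit N x = orbit N (g x)"
proof -
  have pg': "is_perm_on \<Omega> g" using pg g unfolding perm_group_def by auto
  have gi: "perm_inv \<Omega> g \<in> G" using pg g unfolding perm_group_def by auto
  have pgi: "is_perm_on \<Omega> (perm_inv \<Omega> g)" using pg gi unfolding perm_group_def by auto
  have conj: "\<And>h n. h \<in> G \<Longrightarrow> n \<in> N \<Longrightarrow> h \<circ> n \<circ> perm_inv \<Omega> h \<in> N"
    using nn unfolding normal_perm_subgroup_def by auto
  show ?thesis
  proof
    show "g ` orbit N x \<subseteq> orbit N (g x)"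
    proof
      fix y assume "y \<in> g ` orbit N x"
      then obtain n where n: "n \<in> N" and y: "y = g (n x)" unfolding orbit_def by auto
      have "(g \<circ> n \<circ> perm_inv \<Omega> g) (g x) = y" using pinv_left[OF pg' x] y by simp
      then show "y \<in> orbit N (g x)" using conj[OF g n] unfolding orbit_def by blast
    qed
  next
    show "orbit N (g x) \<subseteq> g ` orbit N x"
    proof
      fix y assume "y \<in> orbit N (g x)"
      then obtain n where n: "n \<in> N" and y: "y = n (g x)" unfolding orbit_def by auto
      let ?m = "perm_inv \<Omega> g \<circ> n \<circ> perm_inv \<Omega> (perm_inv \<Omega> g)"
      have m: "?m \<in> N" using conj[OF gi n] .
      have gxO: "g x \<in> \<Omega>" using pg' x unfolding is_perm_on_def by (auto simp: bij_betw_apply)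
      have e: "perm_inv \<Omega> (perm_inv \<Omega> g) x = g x"
        using pinv_left[OF pgi gxO] pinv_left[OF pg' x] by (metis pinv_right[OF pgi gxO])
      have nN: "is_perm_on \<Omega> n" using nn n unfolding normal_perm_subgroup_def perm_group_def by auto
      have yO: "y \<in> \<Omega>" using nN gxO y unfolding is_perm_on_def by (auto simp: bij_betw_apply)
      have "g (?m x) = y" using e pinv_right[OF pg' yO] y by simp
      then show "y \<in> g ` orbit N x" using m unfolding orbit_def by blast
    qed
  qed
qed

theorem lemma3p2:
  fixes \<Omega> :: "'a set" and G N :: "('a \<Rightarrow> 'a) set"
  assumes "finite \<Omega>"
    and "perm_group \<Omega> G"
    and "transitive_on \<Omega> G"
    and "normal_perm_subgroup \<Omega> N G"
    and "card (orbits \<Omega> N) \<ge> 2"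
  shows "mval \<Omega> G \<ge> mval (orbits \<Omega> N) (induced_group \<Omega> N G)"
proof -
  have ne: "\<Omega> \<noteq> {}" using assms(5) unfolding orbits_def by auto
  have idG: "id \<in> G" using assms(2) unfolding perm_group_def by auto
  have "\<exists>A. A \<subseteq> \<Omega> \<and> card A = card \<Omega> \<and> \<not> self_separable G A"
  proof (intro exI[of _ \<Omega>] conjI)
    show "\<not> self_separable G \<Omega>"
    proof
      assume "self_separable G \<Omega>"
      then obtain g where g: "g \<in> G" "\<Omega> \<inter> g ` \<Omega> = {}" unfolding self_separable_def by auto
      have "bij_betw g \<Omega> \<Omega>" using g assms(2) unfolding perm_group_def is_perm_on_def by auto
      then have "g ` \<Omega> = \<Omega>" by (simp add: bij_betw_def)
      then show False using g ne by simp
    qed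
  qed auto
  then have "\<exists>A. A \<subseteq> \<Omega> \<and> card A = mval \<Omega> G \<and> \<not> self_separable G A"
    unfolding mval_def by (rule LeastI)
  then obtain A where A: "A \<subseteq> \<Omega>" "card A = mval \<Omega> G" "\<not> self_separable G A" by blast
  define B where "B = orbit N ` A"
  have Bsub: "B \<subseteq> orbits \<Omega> N" using A(1) unfolding B_def orbits_def by auto
  have cB: "card B \<le> card A" unfolding B_def
    using A(1) assms(1) by (meson card_image_le finite_subset)
  have "\<not> self_separable (induced_group \<Omega> N G) B"
  proof
    assume "self_separable (induced_group \<Omega> N G) B"
    then obtain g where g: "g \<in> G" and d: "B \<inter> induced_perm \<Omega> N g ` B = {}"
      unfolding self_separable_def induced_group_def by auto
    from A(3) g obtain a a' where a: "a' \<in> A" "a = g a'" "a \<in> A"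
      unfolding self_separable_def by blast
    have a'O: "a' \<in> \<Omega>" using a A(1) by auto
    have "induced_perm \<Omega> N g (orbit N a') = orbit N a"
      unfolding induced_perm_def orbits_def using a'O a key[OF assms(2) assms(4) g a'O] by auto
    then show False using d a unfolding B_def by blast
  qed
  then have "mval (orbits \<Omega> N) (induced_group \<Omega> N G) \<le> card B"
    unfolding mval_def using Bsub by (intro Least_le) blast
  then show ?thesis using cB A(2) by simp
qed

end
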